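(* Let $N_c, N_v$ be positive integers, let ${\tt dVc}\in(0,\infty)^{N_c}$ and ${\tt dVv}\in(0,\infty)^{N_v}$, and define $\langle {\tt a},{\tt b}\rangle_c={\tt a}^\top\mathrm{diag}({\tt dVc})\,{\tt b}$ on $\mathbb R^{N_c}$ and $\langle {\tt a},{\tt b}\rangle_v={\tt a}^\top\mathrm{diag}({\tt dVv})\,{\tt b}$ on $\mathbb R^{N_v}$. Let $R:\mathbb R\to(0,\infty)$ be continuously differentiable and non-decreasing, fix $p_0\in\mathbb R$, and set $Q(p)=\int_{p_0}^p \frac{1}{R(q)}\,\mathrm dq$ and $e_{int}(p)=\int_{p_0}^p\frac{R(p)-R(q)}{R(q)}\,\mathrm dq$, all functions being applied componentwise to vectors. Let ${\sf Interp}_{v\leftarrow c}$ be a fixed real $N_v\times N_c$ matrix. Let ${\tt p}(t)\in\mathbb R^{N_c}$ and ${\tt v}(t)\in\mathbb R^{N_v}$, $t\in[0,T]$, be continuously differentiable, set ${\tt rho}=R({\tt p})$ and ${\tt rv}=\mathrm{diag}({\sf Interp}_{v\leftarrow c}{\tt rho})\,{\tt v}$, and suppose that for every $t$ there are real matrices ${\sf DIVr}(t)$ ($N_c\times N_v$), ${\sf rGRAD}(t)$, ${\sf GRAD}(t)$ ($N_v\times N_c$) and ${\sf ADVEC}(t)$ ($N_v\times N_v$) such that (i) ${\sf DIVr}+{\sf rGRAD}^*=0$; (ii) ${\sf rGRAD}\,Q({\tt p})={\sf GRAD}\,{\tt p}$; (iii) ${\sf ADVEC}+{\sf ADVEC}^*=\mathrm{diag}({\sf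 Interp}_{v\leftarrow c}\,{\sf DIVr}\,{\tt v})$; and the semi-discrete isentropic Euler equations $$\frac{\mathrm d\,{\tt rho}}{\mathrm dt}+{\sf DIVr}\,{\tt v}=0,\qquad \frac{\mathrm d\,{\tt rv}}{\mathrm dt}+{\sf ADVEC}\,{\tt v}+{\sf GRAD}\,{\tt p}=0$$ hold. Then the discrete total energy ${\tt E}(t)=\langle {\tt c1},e_{int}({\tt p})\rangle_c+\frac12\langle {\tt v},{\tt rv}\rangle_v$, where ${\tt c1}$ is the vector of all ones, satisfies $\frac{\mathrm d{\tt E}}{\mathrm dt}=0$.
   Context: Adjoints are taken with respect to the weighted inner products: for a real matrix ${\sf A}$ mapping $\mathbb R^{N_{in}}$ (weights ${\tt dV}_{in}$) to $\mathbb R^{N_{out}}$ (weights ${\tt dV}_{out}$), ${\sf A}^*=\mathrm{diag}({\tt dV}_{in})^{-1}{\sf A}^\top\mathrm{diag}({\tt dV}_{out})$, so that $\langle {\tt x},{\sf A}{\tt y}\rangle_{out}=\langle{\sf A}^*{\tt x},{\tt y}\rangle_{in}$. Here $\mathrm{diag}({\tt a})$ is the diagonal matrix with the entries of ${\tt a}$ on its diagonal. The matrices ${\sf DIVr},{\sf rGRAD},{\sf GRAD},{\sf ADVEC}$ are allowed to depend on the state at time $t$. *)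

theory Defs
  imports "HOL-Analysis.Analysis"
begin

definition oint :: "real \<Rightarrow> real \<Rightarrow> (real \<Rightarrow> real) \<Rightarrow> real" where
  "oint a b f = (if a \<le> b then integral {a..b} f else - integral {b..a} f)"

definition wip :: "real^'n \<Rightarrow> real^'n \<Rightarrow> real^'n \<Rightarrow> real" where
  "wip w a b = (\<Sum>i\<in>UNIV. a $ i * w $ i * b $ i)"

definition diagm :: "real^'n \<Rightarrow> real^'n^'n" where
  "diagm a = (\<chi> i j. if i = j then a $ i else 0)"

text \<open>Adjoint of A : R^in (weights dVin) -> R^out (weights dVout):
  diag(dVin)^-1 A^T diag(dVout).\<close>
definition wadj :: "real^'i \<Rightarrow> real^'o \<Rightarrow> real^'i^'o \<Rightarrow> real^'o^'i" where
  "wadj dVin dVout A = (\<chi> i j. A $ j $ i * dVout $ j / dVin $ i)"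

definition cw :: "(real \<Rightarrow> real) \<Rightarrow> real^'n \<Rightarrow> real^'n" where
  "cw f x = (\<chi> i. f (x $ i))"

definition Qfun :: "(real \<Rightarrow> real) \<Rightarrow> real \<Rightarrow> real \<Rightarrow> real" where
  "Qfun R p0 p = oint p0 p (\<lambda>q. 1 / R q)"

definition eint :: "(real \<Rightarrow> real) \<Rightarrow> real \<Rightarrow> real \<Rightarrow> real" where
  "eint R p0 p = oint p0 p (\<lambda>q. (R p - R q) / R q)"

end

theory Submission
  imports Defs
begin

lemma oint_split:
  fixes f :: "real \<Rightarrow> real"
  assumes f: "continuous_on UNIV f" and "c \<le> a" "c \<le> y"
  shows "oint a y f = integral {c..y} f - integral {c..a} f"
proof (cases "a \<le> y")
  case True
  have "integral {c..a} f + integral {a..y} f = integral {c..y} f"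
    using assms True using Henstock_Kurzweil_Integration.integral_combine[where f=f and a=c and c=a and b=y] by (auto intro: integrable_continuous_real continuous_on_subset[OF f])
  then show ?thesis using True by (simp add: oint_def)
next
  case False
  have "integral {c..y} f + integral {y..a} f = integral {c..a} f"
    using assms False using Henstock_Kurzweil_Integration.integral_combine[where f=f and a=c and c=y and b=a] by (auto intro: integrable_continuous_real continuous_on_subset[OF f])
  then show ?thesis using False by (simp add: oint_def)
qed

lemma oint_deriv:
  fixes f :: "real \<Rightarrow> real"
  assumes f: "continuous_on UNIV f"
  shows "((\<lambda>y. oint a y f) has_real_derivative f x) (at x)"
proof -
  define c where "c = min a x - 1"
  define b where "b = max a x + 1"
  have "((\<lambda>y. integral {c..y} f) has_real_derivative f x) (at x within {c..b})"
    by (rule integral_has_real_derivative) (auto simp: c_def b_def intro: continuous_on_subset[OF f])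
  moreover have "at x within {c..b} = at x" by (rule at_within_Icc_at) (auto simp: c_def b_def)
  ultimately have "((\<lambda>y. integral {c..y} f) has_real_derivative f x) (at x)" by simp
  then have "((\<lambda>y. integral {c..y} f - integral {c..a} f) has_real_derivative f x - 0) (at x)"
    by (intro derivative_intros)
  then have "((\<lambda>y. integral {c..y} f - integral {c..a} f) has_real_derivative f x) (at x)" by simp
  then show ?thesis
    apply (rule has_field_derivative_transform_within_open[where S="{c<..}"])
    using oint_split[OF f, where c=c and a=a] by (auto simp: c_def)
qed

lemma oint_lin:
  fixes g :: "real \<Rightarrow> real"
  assumes g: "continuous_on UNIV g"
  shows "oint a y (\<lambda>q. k * g q - 1) = k * oint a y g - (y - a)"
proof -
  have I: "integral {s..t} (\<lambda>q. k * g q - 1) = k * integral {s..t} g - (t - s)" if "s \<le> t" for s t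
  proof -
    have gi: "g integrable_on {s..t}" by (auto intro: integrable_continuous_real continuous_on_subset[OF g])
    have "integral {s..t} (\<lambda>q. k * g q - 1) = integral {s..t} (\<lambda>q. k * g q) - integral {s..t} (\<lambda>q. 1::real)"
      by (rule integral_diff) (auto intro!: integrable_continuous_real continuous_intros continuous_on_subset[OF g])
    also have "\<dots> = k * integral {s..t} g - (t - s)" using that by simp
    finally show ?thesis .
  qed
  show ?thesis by (simp add: oint_def I)
qed

lemma lemA:
  fixes dVc :: "real^'c" and dVv :: "real^'v" and Dv :: "real^'v^'c" and G H :: "real^'c^'v"
  assumes pos: "\<forall>i. dVc $ i > 0"
    and i: "Dv + wadj dVc dVv G = 0" and ii: "G *v q = H *v P"
  shows "(\<Sum>i\<in>UNIV. dVc$i * (Dv *v w)$i * q$i) = - (\<Sum>j\<in>UNIV. dVv$j * w$j * (H *v P)$j)"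
proof -
  have Dij: "Dv$i$j = - (G$j$i * dVv$j / dVc$i)" for i j
  proof -
    have "(Dv + wadj dVc dVv G)$i$j = 0" using i by simp
    then show ?thesis by (simp add: wadj_def)
  qed
  have "dVc$i * (Dv *v w)$i = - (\<Sum>j\<in>UNIV. G$j$i * dVv$j * w$j)" for i
  proof -
    have "dVc$i * (Dv *v w)$i = (\<Sum>j\<in>UNIV. dVc$i * (Dv$i$j * w$j))"
      by (simp add: matrix_vector_mult_def sum_distrib_left)
    also have "\<dots> = (\<Sum>j\<in>UNIV. - (G$j$i * dVv$j * w$j))"
    proof (intro sum.cong refl)
      fix j
      have "dVc$i \<noteq> 0" using pos by (metis less_irrefl)
      then show "dVc$i * (Dv$i$j * w$j) = - (G$j$i * dVv$j * w$j)" unfolding Dij by (simp add: field_simps)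
    qed
    finally show ?thesis by (simp add: sum_negf)
  qed
  then have "(\<Sum>i\<in>UNIV. dVc$i * (Dv *v w)$i * q$i) = (\<Sum>i\<in>UNIV. - (\<Sum>j\<in>UNIV. G$j$i * dVv$j * w$j) * q$i)"
    by simp
  also have "\<dots> = - (\<Sum>i\<in>UNIV. \<Sum>j\<in>UNIV. G$j$i * dVv$j * w$j * q$i)"
    by (simp add: sum_distrib_right sum_negf)
  also have "\<dots> = - (\<Sum>j\<in>UNIV. \<Sum>i\<in>UNIV. G$j$i * dVv$j * w$j * q$i)"
    by (subst sum.swap) simp
  also have "\<dots> = - (\<Sum>j\<in>UNIV. dVv$j * w$j * (G *v q)$j)"
    by (simp add: matrix_vector_mult_def sum_distrib_left mult_ac)
  finally show ?thesis using ii by simp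
qed

lemma lemB:
  fixes dVv :: "real^'v" and A :: "real^'v^'v"
  assumes pos: "\<forall>i. dVv $ i > 0"
    and iii: "A + wadj dVv dVv A = diagm d"
  shows "(\<Sum>j\<in>UNIV. dVv$j * w$j * (A *v w)$j) = 1/2 * (\<Sum>j\<in>UNIV. dVv$j * d$j * w$j * w$j)"
proof -
  have Ajk: "A$j$k + A$k$j * dVv$k / dVv$j = (if j = k then d$j else 0)" for j k
  proof -
    have "(A + wadj dVv dVv A)$j$k = diagm d $j$k" using iii by simp
    then show ?thesis by (simp add: wadj_def diagm_def)
  qed
  define S where "S = (\<Sum>j\<in>UNIV. dVv$j * w$j * (A *v w)$j)"
  have S1: "S = (\<Sum>j\<in>UNIV. \<Sum>k\<in>UNIV. dVv$j * w$j * A$j$k * w$k)"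
    by (simp add: S_def matrix_vector_mult_def sum_distrib_left mult_ac)
  have S2: "S = (\<Sum>j\<in>UNIV. \<Sum>k\<in>UNIV. dVv$k * w$j * A$k$j * w$k)"
    unfolding S1 by (subst sum.swap) (simp add: mult_ac)
  have "(\<Sum>j\<in>UNIV. \<Sum>k\<in>UNIV. dVv$j * w$j * w$k * (A$j$k + A$k$j * dVv$k / dVv$j))
      = (\<Sum>j\<in>UNIV. \<Sum>k\<in>UNIV. dVv$j * w$j * A$j$k * w$k + dVv$k * w$j * A$k$j * w$k)"
  proof (intro sum.cong refl)
    fix j k :: 'v
    have "dVv$j \<noteq> 0" using pos by (metis less_irrefl)
    then show "dVv$j * w$j * w$k * (A$j$k + A$k$j * dVv$k / dVv$j) = dVv$j * w$j * A$j$k * w$k + dVv$k * w$j * A$k$j * w$k"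
      by (simp add: field_simps)
  qed
  also have "\<dots> = S + S" unfolding sum.distrib by (simp add: S1[symmetric] S2[symmetric])
  finally have "S + S = (\<Sum>j\<in>UNIV. \<Sum>k\<in>UNIV. dVv$j * w$j * w$k * (if j = k then d$j else 0))"
    by (simp add: Ajk)
  also have "\<dots> = (\<Sum>j\<in>UNIV. dVv$j * d$j * w$j * w$j)"
    by (simp add: if_distrib mult_ac cong: if_cong)
  finally show ?thesis by (simp add: S_def)
qed

theorem mainTheorem1:
  fixes dVc :: "real^'c" and dVv :: "real^'v"
    and R R' :: "real \<Rightarrow> real" and p0 T :: real
    and Interp :: "real^'c^'v"
    and p p' :: "real \<Rightarrow> real^'c" and v v' :: "real \<Rightarrow> real^'v"
    and DIVr :: "real \<Rightarrow> real^'v^'c"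
    and rGRAD GRAD :: "real \<Rightarrow> real^'c^'v"
    and ADVEC :: "real \<Rightarrow> real^'v^'v"
  defines "rho \<equiv> (\<lambda>t. cw R (p t))"
    and "rv \<equiv> (\<lambda>t. diagm (Interp *v cw R (p t)) *v v t)"
    and "E \<equiv> (\<lambda>t. wip dVc (\<chi> i. 1) (cw (eint R p0) (p t)) + 1/2 * wip dVv (v t) (diagm (Interp *v cw R (p t)) *v v t))"
  assumes dVc_pos: "\<forall>i. dVc $ i > 0"
    and dVv_pos: "\<forall>i. dVv $ i > 0"
    and R_pos: "\<forall>x. R x > 0"
    and R_deriv: "\<forall>x. (R has_real_derivative R' x) (at x)"
    and R'_cont: "continuous_on UNIV R'"
    and R_mono: "mono R"
    and p_deriv: "\<forall>t\<in>{0..T}. (p has_vector_derivative p' t) (at t within {0..T})"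
    and p'_cont: "continuous_on {0..T} p'"
    and v_deriv: "\<forall>t\<in>{0..T}. (v has_vector_derivative v' t) (at t within {0..T})"
    and v'_cont: "continuous_on {0..T} v'"
    and i: "\<forall>t\<in>{0..T}. DIVr t + wadj dVc dVv (rGRAD t) = 0"
    and ii: "\<forall>t\<in>{0..T}. rGRAD t *v cw (Qfun R p0) (p t) = GRAD t *v p t"
    and iii: "\<forall>t\<in>{0..T}. ADVEC t + wadj dVv dVv (ADVEC t) = diagm (Interp *v (DIVr t *v v t))"
    and mass: "\<forall>t\<in>{0..T}. (rho has_vector_derivative - (DIVr t *v v t)) (at t within {0..T})"
    and momentum: "\<forall>t\<in>{0..T}. (rv has_vector_derivative - (ADVEC t *v v t + GRAD t *v p t)) (at t within {0..T})"
  shows "\<forall>t\<in>{0..T}. (E has_real_derivative 0) (at t within {0..T})"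
  proof
  fix t assume t: "t \<in> {0..T}"
  define a where "a = (\<lambda>s j. (Interp *v cw R (p s)) $ j)"
  define Q where "Q = Qfun R p0"
  have Rnz: "R x \<noteq> 0" for x using R_pos by (metis less_irrefl)
  have Rcont: "continuous_on UNIV (\<lambda>q. 1 / R q)"
  proof -
    have "continuous_on UNIV R"
      using R_deriv by (meson DERIV_isCont continuous_at_imp_continuous_on)
    then show ?thesis using Rnz by (intro continuous_intros) auto
  qed
  have Qd: "(Q has_real_derivative 1 / R x) (at x)" for x
    unfolding Q_def Qfun_def by (rule oint_deriv[OF Rcont])
  have eint_eq: "eint R p0 x = R x * Q x - (x - p0)" for x
  proof -
    have "eint R p0 x = oint p0 x (\<lambda>q. R x * (1 / R q) - 1)"
      unfolding eint_def using Rnz by (simp add: diff_divide_distrib)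
    also have "\<dots> = R x * Q x - (x - p0)"
      unfolding Q_def Qfun_def by (rule oint_lin[OF Rcont])
    finally show ?thesis .
  qed
  have diagv: "(diagm x *v y) $ j = x $ j * y $ j" for x y :: "real^'v" and j
  proof -
    have "(\<Sum>k\<in>UNIV. (if j = k then x$j else 0) * y$k) = (\<Sum>k\<in>UNIV. if j = k then x$j * y$k else 0)"
      by (rule sum.cong) auto
    then show ?thesis by (simp add: diagm_def matrix_vector_mult_def)
  qed
  have Eeq: "E = (\<lambda>s. (\<Sum>i\<in>UNIV. dVc$i * (R (p s$i) * Q (p s$i) - (p s$i - p0)))
      + (\<Sum>j\<in>UNIV. dVv$j * (v s$j * (a s j * v s$j)))
      - 1/2 * (\<Sum>j\<in>UNIV. dVv$j * (a s j * (v s$j * v s$j))))"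
  proof
    fix s
    have "(\<Sum>j\<in>UNIV. dVv$j * (v s$j * (a s j * v s$j))) - 1/2 * (\<Sum>j\<in>UNIV. dVv$j * (a s j * (v s$j * v s$j)))
       = 1/2 * (\<Sum>j\<in>UNIV. v s $ j * dVv $ j * (diagm (Interp *v cw R (p s)) *v v s) $ j)"
      by (simp add: diagv a_def sum_distrib_left mult_ac flip: sum_subtractf)
    then show "E s = (\<Sum>i\<in>UNIV. dVc$i * (R (p s$i) * Q (p s$i) - (p s$i - p0)))
      + (\<Sum>j\<in>UNIV. dVv$j * (v s$j * (a s j * v s$j)))
      - 1/2 * (\<Sum>j\<in>UNIV. dVv$j * (a s j * (v s$j * v s$j)))"
      by (simp add: E_def wip_def cw_def eint_eq)
  qed
  have pd: "((\<lambda>s. p s $ i) has_real_derivative p' t $ i) (at t within {0..T})" for i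
    using bounded_linear.has_vector_derivative[OF bounded_linear_vec_nth p_deriv[rule_format, OF t]]
    by (simp add: has_real_derivative_iff_has_vector_derivative)
  have vd: "((\<lambda>s. v s $ i) has_real_derivative v' t $ i) (at t within {0..T})" for i
    using bounded_linear.has_vector_derivative[OF bounded_linear_vec_nth v_deriv[rule_format, OF t]]
    by (simp add: has_real_derivative_iff_has_vector_derivative)
  have rhod: "((\<lambda>s. R (p s $ i)) has_real_derivative - (DIVr t *v v t) $ i) (at t within {0..T})" for i
    using bounded_linear.has_vector_derivative[OF bounded_linear_vec_nth mass[rule_format, OF t], of i]
    by (simp add: has_real_derivative_iff_has_vector_derivative rho_def cw_def)
  have rvd: "((\<lambda>s. a s j * v s $ j) has_real_derivative - (ADVEC t *v v t + GRAD t *v p t) $ j) (at t within {0..T})" for j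
    using bounded_linear.has_vector_derivative[OF bounded_linear_vec_nth momentum[rule_format, OF t], of j]
    by (simp add: has_real_derivative_iff_has_vector_derivative rv_def diagv a_def)
  have ad: "((\<lambda>s. a s j) has_real_derivative - (Interp *v (DIVr t *v v t)) $ j) (at t within {0..T})" for j
  proof -
    have "((\<lambda>s. Interp *v rho s) has_vector_derivative Interp *v (- (DIVr t *v v t))) (at t within {0..T})"
      using bounded_linear.has_vector_derivative[OF matrix_vector_mul_bounded_linear[of Interp] mass[rule_format, OF t]]
      by simp
    from bounded_linear.has_vector_derivative[OF bounded_linear_vec_nth this, of j]
    show ?thesis
      by (simp add: has_real_derivative_iff_has_vector_derivative rho_def a_def matrix_vector_mult_def sum_negf)
  qed
  have T1: "((\<lambda>s. dVc$i * (R (p s$i) * Q (p s$i) - (p s$i - p0))) has_real_derivative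
      dVc$i * (- (DIVr t *v v t)$i * Q (p t$i))) (at t within {0..T})" for i
  proof -
    have "((\<lambda>s. Q (p s$i)) has_real_derivative 1 / R (p t$i) * p' t$i) (at t within {0..T})"
      by (rule DERIV_chain2[OF Qd pd])
    from DERIV_mult[OF rhod this]
    have "((\<lambda>s. R (p s$i) * Q (p s$i) - (p s$i - p0)) has_real_derivative
       (- (DIVr t *v v t)$i * Q (p t$i) + 1 / R (p t$i) * p' t$i * R (p t$i)) - (p' t$i - 0)) (at t within {0..T})"
      by (intro DERIV_diff pd DERIV_const)
    then show ?thesis using Rnz[of "p t$i"]
      by (intro DERIV_cmult) (auto elim!: DERIV_cong)
  qed
  have T2: "((\<lambda>s. dVv$j * (v s$j * (a s j * v s$j))) has_real_derivative
      dVv$j * (v t$j * (- (ADVEC t *v v t + GRAD t *v p t) $ j) + v' t$j * (a t j * v t$j))) (at t within {0..T})" for j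
    by (intro DERIV_cmult DERIV_mult' vd rvd)
  have T3: "((\<lambda>s. dVv$j * (a s j * (v s$j * v s$j))) has_real_derivative
      dVv$j * (a t j * (v t$j * v' t$j + v' t$j * v t$j) + (- (Interp *v (DIVr t *v v t)) $ j) * (v t$j * v t$j))) (at t within {0..T})" for j
    by (intro DERIV_cmult DERIV_mult' vd ad)
  define w where "w = v t"
  define dd where "dd = Interp *v (DIVr t *v v t)"
  have A: "(\<Sum>i\<in>UNIV. dVc$i * (DIVr t *v w)$i * (cw Q (p t))$i) = - (\<Sum>j\<in>UNIV. dVv$j * w$j * (GRAD t *v p t)$j)"
    by (rule lemA[OF dVc_pos i[rule_format, OF t]]) (use ii t in \<open>simp add: Q_def\<close>)
  have B: "(\<Sum>j\<in>UNIV. dVv$j * w$j * (ADVEC t *v w)$j) = 1/2 * (\<Sum>j\<in>UNIV. dVv$j * dd$j * w$j * w$j)"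
    by (rule lemB[OF dVv_pos]) (use iii t in \<open>simp add: dd_def w_def\<close>)
  have "(E has_real_derivative
      (\<Sum>i\<in>UNIV. dVc$i * (- (DIVr t *v v t)$i * Q (p t$i)))
    + (\<Sum>j\<in>UNIV. dVv$j * (v t$j * (- (ADVEC t *v v t + GRAD t *v p t) $ j) + v' t$j * (a t j * v t$j)))
    - 1/2 * (\<Sum>j\<in>UNIV. dVv$j * (a t j * (v t$j * v' t$j + v' t$j * v t$j) + (- (Interp *v (DIVr t *v v t)) $ j) * (v t$j * v t$j))))
    (at t within {0..T})"
    unfolding Eeq by (intro DERIV_diff DERIV_add DERIV_sum DERIV_cmult T1 T2 T3)
  moreover have "(\<Sum>i\<in>UNIV. dVc$i * (- (DIVr t *v v t)$i * Q (p t$i)))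
    + (\<Sum>j\<in>UNIV. dVv$j * (v t$j * (- (ADVEC t *v v t + GRAD t *v p t) $ j) + v' t$j * (a t j * v t$j)))
    - 1/2 * (\<Sum>j\<in>UNIV. dVv$j * (a t j * (v t$j * v' t$j + v' t$j * v t$j) + (- (Interp *v (DIVr t *v v t)) $ j) * (v t$j * v t$j))) = 0"
  proof -
    have e1: "(\<Sum>i\<in>UNIV. dVc$i * (- (DIVr t *v v t)$i * Q (p t$i))) = - (\<Sum>i\<in>UNIV. dVc$i * (DIVr t *v w)$i * (cw Q (p t))$i)"
      by (simp add: w_def cw_def mult.assoc sum_negf[symmetric])
    have e2: "(\<Sum>j\<in>UNIV. dVv$j * (v t$j * (- (ADVEC t *v v t + GRAD t *v p t) $ j) + v' t$j * (a t j * v t$j)))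
       = (\<Sum>j\<in>UNIV. dVv$j * v' t$j * a t j * w$j) - (\<Sum>j\<in>UNIV. dVv$j * w$j * (ADVEC t *v w)$j) - (\<Sum>j\<in>UNIV. dVv$j * w$j * (GRAD t *v p t)$j)"
      by (simp add: w_def algebra_simps sum.distrib sum_subtractf)
    have e3: "(\<Sum>j\<in>UNIV. dVv$j * (a t j * (v t$j * v' t$j + v' t$j * v t$j) + (- (Interp *v (DIVr t *v v t)) $ j) * (v t$j * v t$j)))
       = 2 * (\<Sum>j\<in>UNIV. dVv$j * v' t$j * a t j * w$j) - (\<Sum>j\<in>UNIV. dVv$j * dd$j * w$j * w$j)"
      by (simp add: w_def dd_def algebra_simps sum.distrib sum_subtractf sum_distrib_left)
    show ?thesis unfolding e1 e2 e3 A B by simp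
  qed
  ultimately show "(E has_real_derivative 0) (at t within {0..T})" by (rule DERIV_cong)
qed

end
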